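(* Let $\pi\in(0,1)$, $\eta\in\mathcal{P}(\mathbb{R})$ and $y\in\mathbb{R}$. Define $\mathrm{KL}^L_{\inf}(\eta,y)=\inf\{\mathrm{KL}(\eta,\kappa):\kappa\in\mathcal{P}(\mathbb{R}),\ x_\pi(\kappa)\le y\}$ and $\mathrm{KL}^U_{\inf}(\eta,y)=\inf\{\mathrm{KL}(\eta,\kappa):\kappa\in\mathcal{P}(\mathbb{R}),\ x_\pi(\kappa)\ge y\}$. Then \[\mathrm{KL}^L_{\inf}(\eta,y)=d_2(\min\{F_\eta(y),\pi\},\pi)\quad\text{and}\quad\mathrm{KL}^U_{\inf}(\eta,y)=d_2(\max\{F^-_\eta(y),\pi\},\pi).\]
   Context: $F_\eta(y)=\eta((-\infty,y])$ and $F^-_\eta(y)=\lim_{z\uparrow y}F_\eta(z)$. $x_\pi(\kappa)=\min\{z:F_\kappa(z)\ge\pi\}$ is the value-at-risk. $\mathrm{KL}(\eta,\kappa)=\int\log\frac{d\eta}{d\kappa}d\eta$ if $\eta\ll\kappa$, else $+\infty$. $d_2(r,q)=r\log\frac rq+(1-r)\log\frac{1-r}{1-q}$ is the KL divergence between Bernoulli$(r)$ and Bernoulli$(q)$ (with $0\log0=0$). *)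

theory Defs
  imports "HOL-Probability.Probability"
begin

definition prob_real :: "real measure \<Rightarrow> bool" where
  "prob_real \<eta> \<longleftrightarrow> prob_space \<eta> \<and> sets \<eta> = sets borel"

definition cdf_of :: "real measure \<Rightarrow> real \<Rightarrow> real" where
  "cdf_of \<eta> y = measure \<eta> {..y}"

definition cdf_left :: "real measure \<Rightarrow> real \<Rightarrow> real" where
  "cdf_left \<eta> y = Lim (at_left y) (cdf_of \<eta>)"

definition VaR :: "real \<Rightarrow> real measure \<Rightarrow> real" where
  "VaR p \<kappa> = (LEAST z. cdf_of \<kappa> z \<ge> p)"

definition KL :: "real measure \<Rightarrow> real measure \<Rightarrow> ereal" where
  "KL \<eta> \<kappa> =
     (if absolutely_continuous \<kappa> \<eta> then
        enn2ereal (\<integral>\<^sup>+ x. ennreal (max 0 (ln (enn2real (RN_deriv \<kappa> \<eta> x)))) \<partial>\<eta>)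
      - enn2ereal (\<integral>\<^sup>+ x. ennreal (max 0 (- ln (enn2real (RN_deriv \<kappa> \<eta> x)))) \<partial>\<eta>)
      else \<infinity>)"

text \<open>Bernoulli KL divergence with the convention 0 log 0 = 0.\<close>
definition d2 :: "real \<Rightarrow> real \<Rightarrow> real" where
  "d2 r q = (if r = 0 then 0 else r * ln (r / q))
          + (if r = 1 then 0 else (1 - r) * ln ((1 - r) / (1 - q)))"

definition KLinf_L :: "real \<Rightarrow> real measure \<Rightarrow> real \<Rightarrow> ereal" where
  "KLinf_L p \<eta> y = Inf {KL \<eta> \<kappa> | \<kappa>. prob_real \<kappa> \<and> VaR p \<kappa> \<le> y}"

definition KLinf_U :: "real \<Rightarrow> real measure \<Rightarrow> real \<Rightarrow> ereal" where
  "KLinf_U p \<eta> y = Inf {KL \<eta> \<kappa> | \<kappa>. prob_real \<kappa> \<and> VaR p \<kappa> \<ge> y}"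

end

theory Submission
  imports Defs
begin

lemma rd: "prob_real M \<Longrightarrow> real_distribution M"
  unfolding prob_real_def real_distribution_def real_distribution_axioms_def by auto

lemma cdf_of_eq: "prob_real M \<Longrightarrow> cdf_of M = cdf M"
  by (auto simp: cdf_of_def cdf_def2 fun_eq_iff)

lemma cdf_left_eq:
  assumes "prob_real M" shows "cdf_left M y = measure M {..<y}"
proof -
  interpret real_distribution M using rd[OF assms] .
  show ?thesis unfolding cdf_left_def cdf_of_eq[OF assms]
    by (rule tendsto_Lim[OF trivial_limit_at_left_real cdf_at_left])
qed

lemma VaR_props:
  assumes "prob_real K" "0 < p" "p < 1"
  shows "cdf_of K (VaR p K) \<ge> p \<and> (\<forall>z. cdf_of K z \<ge> p \<longrightarrow> VaR p K \<le> z)"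
proof -
  interpret real_distribution K using rd[OF assms(1)] .
  define F where "F = cdf K"
  have Fe: "cdf_of K = F" using cdf_of_eq[OF assms(1)] F_def by simp
  define S where "S = {z. F z \<ge> p}"
  have "eventually (\<lambda>z. F z > p) at_top"
    using order_tendstoD(1)[OF cdf_lim_at_top_prob, of p] assms F_def by auto
  then obtain z0 where z0: "z0 \<in> S" unfolding S_def eventually_at_top_linorder
    by (metis less_imp_le mem_Collect_eq order_refl)
  have "eventually (\<lambda>z. F z < p) at_bot"
    using order_tendstoD(2)[OF cdf_lim_at_bot, of p] assms F_def by auto
  then obtain b where b: "\<And>z. z \<le> b \<Longrightarrow> F z < p" unfolding eventually_at_bot_linorder by auto
  have bdd: "bdd_below S"
    unfolding bdd_below_def S_def using b by (metis linorder_not_le mem_Collect_eq not_less order.strict_implies_order)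
  define m where "m = Inf S"
  have low: "\<And>z. z \<in> S \<Longrightarrow> m \<le> z" unfolding m_def using bdd by (simp add: cInf_lower)
  have rc: "(F \<longlongrightarrow> F m) (at_right m)"
    using cdf_is_right_cont[of m] F_def by (simp add: continuous_within)
  have ev: "eventually (\<lambda>z. F z \<ge> p) (at_right m)"
    unfolding eventually_at_right_field
  proof (intro exI[of _ "m+1"] conjI allI impI)
    fix z assume "m < z" "z < m + 1"
    then have "Inf S < z" unfolding m_def by simp
    then obtain s where "s \<in> S" "s < z" using z0 by (metis cInf_lessD empty_iff)
    then show "F z \<ge> p" using cdf_nondecreasing[of s z] unfolding S_def F_def
      by auto
  qed simp
  have Fm: "F m \<ge> p"
    using tendsto_lowerbound[OF rc ev] by simp
  have "VaR p K = m" unfolding VaR_def Fe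
    by (rule Least_equality) (use Fm low S_def in auto)
  then show ?thesis using Fm low S_def Fe by auto
qed


lemma nn_two:
  assumes M: "prob_real M" and A: "A \<in> sets borel" and ab: "\<alpha> \<ge> 0" "\<beta> \<ge> 0"
    and h: "AE x in M. h x = (if x \<in> A then \<alpha> else \<beta>)"
  shows "(\<integral>\<^sup>+x. ennreal (h x) \<partial>M) = ennreal (\<alpha> * measure M A + \<beta> * (1 - measure M A))"
proof -
  interpret real_distribution M using rd[OF M] .
  have sA[measurable]: "A \<in> sets M" using A by simp
  have sAc[measurable]: "space M - A \<in> sets M" using sA by blast
  have "(\<integral>\<^sup>+x. ennreal (h x) \<partial>M) = (\<integral>\<^sup>+x. ennreal \<alpha> * indicator A x + ennreal \<beta> * indicator (space M - A) x \<partial>M)"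
    apply (rule nn_integral_cong_AE) 
    using h by eventually_elim (auto split: split_indicator)
  also have "\<dots> = ennreal \<alpha> * emeasure M A + ennreal \<beta> * emeasure M (space M - A)"
    using sA sAc by (simp add: nn_integral_add nn_integral_cmult_indicator del: events_eq_borel)
  also have "\<dots> = ennreal (\<alpha> * measure M A + \<beta> * (1 - measure M A))"
  proof -
    have m: "emeasure M A = ennreal (measure M A)" "emeasure M (space M - A) = ennreal (1 - measure M A)"
      by (simp_all only: emeasure_eq_measure prob_compl[OF sA])
    have "0 \<le> measure M A" "measure M A \<le> 1" by simp_all
    then show ?thesis using ab unfolding m
      by (simp add: ennreal_mult)
  qed
  finally show ?thesis .
qed


lemma ln_ineq:
  fixes F c :: real assumes "F > 0" "c > 0"
  shows "ln F \<ge> 1 + ln c - c / F"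
proof -
  have "ln (c / F) \<le> c / F - 1" using assms by (intro ln_le_minus_one) simp
  moreover have "ln (c / F) = ln c - ln F" using assms by (simp add: ln_div)
  ultimately show ?thesis by simp
qed

lemma ennreal_add3_le:
  fixes a b c d e :: real
  assumes "0\<le>a" "0\<le>b" "0\<le>c" "0\<le>d" "0\<le>e" "a + b \<le> c + d + e"
  shows "ennreal a + ennreal b \<le> ennreal c + ennreal d + ennreal e"
proof -
  have "ennreal (a + b) \<le> ennreal (c + d + e)" by (rule ennreal_leI) fact
  then show ?thesis using assms by simp
qed

lemma div_bound:
  fixes g :: "real \<Rightarrow> real"
  assumes E: "prob_real \<eta>" and K: "prob_real \<kappa>" and ac: "absolutely_continuous \<kappa> \<eta>"
    and g[measurable]: "g \<in> borel_measurable borel" and gn: "\<And>x. g x \<ge> 0"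
  shows "(\<integral>\<^sup>+x. ennreal (g x / enn2real (RN_deriv \<kappa> \<eta> x)) \<partial>\<eta>) \<le> (\<integral>\<^sup>+x. ennreal (g x) \<partial>\<kappa>)"
proof -
  interpret K: real_distribution \<kappa> using rd[OF K] .
  interpret E: real_distribution \<eta> using rd[OF E] .
  have se: "sets \<eta> = sets \<kappa>" by simp
  have dens: "density \<kappa> (RN_deriv \<kappa> \<eta>) = \<eta>" using K.density_RN_deriv[OF ac se] .
  have "(\<integral>\<^sup>+x. ennreal (g x / enn2real (RN_deriv \<kappa> \<eta> x)) \<partial>\<eta>)
     = (\<integral>\<^sup>+x. ennreal (g x / enn2real (RN_deriv \<kappa> \<eta> x)) \<partial>density \<kappa> (RN_deriv \<kappa> \<eta>))"
    using dens by simp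
  also have "\<dots> = (\<integral>\<^sup>+x. RN_deriv \<kappa> \<eta> x * ennreal (g x / enn2real (RN_deriv \<kappa> \<eta> x)) \<partial>\<kappa>)"
    by (rule nn_integral_density) measurable
  also have "\<dots> \<le> (\<integral>\<^sup>+x. ennreal (g x) \<partial>\<kappa>)"
  proof (rule nn_integral_mono)
    fix x
    show "RN_deriv \<kappa> \<eta> x * ennreal (g x / enn2real (RN_deriv \<kappa> \<eta> x)) \<le> ennreal (g x)"
    proof (cases "RN_deriv \<kappa> \<eta> x" rule: ennreal_cases)
      case (real r)
      show ?thesis
      proof (cases "r = 0")
        case False
        then have "r > 0" using real by simp
        then show ?thesis using real gn[of x] by (simp add: ennreal_mult''[symmetric])
      qed (use real in simp)
    qed simp
  qed
  finally show ?thesis .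
qed

lemma KL_lower:
  assumes E: "prob_real \<eta>" and K: "prob_real \<kappa>" and A: "A \<in> sets borel"
    and c: "c \<ge> 0" "c' \<ge> 0" "c = 0 \<Longrightarrow> measure \<eta> A = 0" "c' = 0 \<Longrightarrow> measure \<eta> A = 1"
  shows "KL \<eta> \<kappa> \<ge> ereal (measure \<eta> A * (1 + ln c) + (1 - measure \<eta> A) * (1 + ln c')
            - c * measure \<kappa> A - c' * (1 - measure \<kappa> A))"
proof (cases "absolutely_continuous \<kappa> \<eta>")
  case False then show ?thesis by (simp add: KL_def)
next
  case ac: True
  interpret K: real_distribution \<kappa> using rd[OF K] .
  interpret E: real_distribution \<eta> using rd[OF E] .
  have se: "sets \<eta> = sets \<kappa>" by simp
  define f where "f = RN_deriv \<kappa> \<eta>"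
  define F where "F x = enn2real (f x)" for x
  define cx where "cx x = (if x \<in> A then c else c')" for x
  define a where "a = measure \<eta> A"
  define b where "b = measure \<kappa> A"
  have sA[measurable]: "A \<in> sets borel" by fact
  have dens: "density \<kappa> f = \<eta>" unfolding f_def using K.density_RN_deriv[OF ac se] .
  have fm0: "f \<in> borel_measurable \<kappa>" unfolding f_def by (rule borel_measurable_RN_deriv)
  have fm[measurable]: "f \<in> borel_measurable borel" using fm0 by (simp only: measurable_cong_sets[OF K.events_eq_borel refl])
  have cxm[measurable]: "cx \<in> borel_measurable borel" unfolding cx_def by measurable
  have finK: "AE x in \<kappa>. f x \<noteq> \<infinity>" unfolding f_def
    by (rule K.RN_deriv_finite[OF _ ac se]) (simp add: E.sigma_finite_measure_axioms)
  have finE: "AE x in \<eta>. f x \<noteq> \<infinity>" by (rule absolutely_continuous_AE[OF se ac finK])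
  have posE: "AE x in \<eta>. 0 < f x"
  proof -
    have "AE x in density \<kappa> f. 0 < f x" by (subst AE_density[OF fm0]) simp
    then show ?thesis by (simp only: dens)
  qed
  have FposE: "AE x in \<eta>. 0 < F x"
    using finE posE by eventually_elim (auto simp: F_def enn2real_positive_iff top.not_eq_extremum)
  have c1: "AE x in \<eta>. x \<in> A \<longrightarrow> c > 0"
  proof (cases "c > 0")
    case False
    then have "c = 0" using c by simp
    then have "A \<in> null_sets \<eta>" using c(3) by (simp add: E.emeasure_eq_measure null_sets_def)
    then show ?thesis using AE_not_in by (metis (mono_tags, lifting) eventually_mono)
  qed simp
  have c2: "AE x in \<eta>. x \<notin> A \<longrightarrow> c' > 0"
  proof (cases "c' > 0")
    case False
    then have "c' = 0" using c by simp
    then have "measure \<eta> (space \<eta> - A) = 0" using c(4) E.prob_compl[of A] by simp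
    then have "space \<eta> - A \<in> null_sets \<eta>" by (simp add: E.emeasure_eq_measure null_sets_def)
    then show ?thesis using AE_not_in by (metis (mono_tags, lifting) eventually_mono DiffI E.space_eq_univ UNIV_I)
  qed simp
  have cpos: "AE x in \<eta>. cx x > 0" using c1 c2 by eventually_elim (auto simp: cx_def)
  define P where "P = (\<integral>\<^sup>+x. ennreal (max 0 (ln (F x))) \<partial>\<eta>)"
  define N where "N = (\<integral>\<^sup>+x. ennreal (max 0 (- ln (F x))) \<partial>\<eta>)"
  define Q where "Q = (\<integral>\<^sup>+x. ennreal (cx x / F x) \<partial>\<eta>)"
  define Kp where "Kp = (\<integral>\<^sup>+x. ennreal (max 0 (1 + ln (cx x))) \<partial>\<eta>)"
  define Km where "Km = (\<integral>\<^sup>+x. ennreal (max 0 (- (1 + ln (cx x)))) \<partial>\<eta>)"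
  have KLe: "KL \<eta> \<kappa> = enn2ereal P - enn2ereal N"
    using ac unfolding KL_def P_def N_def F_def f_def by simp
  have main: "N + Kp \<le> P + Q + Km"
  proof -
    have "N + Kp = (\<integral>\<^sup>+x. ennreal (max 0 (- ln (F x))) + ennreal (max 0 (1 + ln (cx x))) \<partial>\<eta>)"
      unfolding N_def Kp_def F_def by (rule nn_integral_add[symmetric]) measurable
    also have "\<dots> \<le> (\<integral>\<^sup>+x. ennreal (max 0 (ln (F x))) + ennreal (cx x / F x) + ennreal (max 0 (- (1 + ln (cx x)))) \<partial>\<eta>)"
    proof (rule nn_integral_mono_AE)
      show "AE x in \<eta>. ennreal (max 0 (- ln (F x))) + ennreal (max 0 (1 + ln (cx x)))
          \<le> ennreal (max 0 (ln (F x))) + ennreal (cx x / F x) + ennreal (max 0 (- (1 + ln (cx x))))"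
        using FposE cpos
      proof eventually_elim
        case (elim x)
        have i: "ln (F x) \<ge> 1 + ln (cx x) - cx x / F x" using ln_ineq elim by blast
        have q: "cx x / F x \<ge> 0" using elim by simp
        have "max 0 (- ln (F x)) + max 0 (1 + ln (cx x)) \<le> max 0 (ln (F x)) + cx x / F x + max 0 (- (1 + ln (cx x)))"
          using i by (auto simp: max_def)
        then show ?case by (intro ennreal_add3_le q) auto
      qed
    qed
    also have "\<dots> = P + Q + Km"
      unfolding P_def Q_def Km_def F_def
      by (simp add: nn_integral_add)
    finally show ?thesis .
  qed
  have Kpv: "Kp = ennreal (max 0 (1 + ln c) * a + max 0 (1 + ln c') * (1 - a))"
    unfolding Kp_def a_def by (rule nn_two[OF E A]) (auto simp: cx_def)
  have Kmv: "Km = ennreal (max 0 (- (1 + ln c)) * a + max 0 (- (1 + ln c')) * (1 - a))"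
    unfolding Km_def a_def by (rule nn_two[OF E A]) (auto simp: cx_def)
  have Qv: "Q \<le> ennreal (c * b + c' * (1 - b))"
  proof -
    have "Q \<le> (\<integral>\<^sup>+x. ennreal (cx x) \<partial>\<kappa>)"
      unfolding Q_def F_def f_def by (rule div_bound[OF E K ac cxm]) (use c in \<open>simp add: cx_def\<close>)
    also have "\<dots> = ennreal (c * b + c' * (1 - b))"
      unfolding b_def by (rule nn_two[OF K A]) (use c in \<open>auto simp: cx_def\<close>)
    finally show ?thesis .
  qed
  have Nv: "N \<le> 1"
  proof -
    have "N \<le> (\<integral>\<^sup>+x. ennreal (1 / F x) \<partial>\<eta>)"
      unfolding N_def
    proof (rule nn_integral_mono_AE)
      show "AE x in \<eta>. ennreal (max 0 (- ln (F x))) \<le> ennreal (1 / F x)"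
        using FposE
      proof eventually_elim
        case (elim x)
        have "ln (F x) \<ge> 1 + ln 1 - 1 / F x" using ln_ineq[OF elim, of 1] by simp
        then show ?case using elim by (intro ennreal_leI) auto
      qed
    qed
    also have "\<dots> \<le> (\<integral>\<^sup>+x. ennreal 1 \<partial>\<kappa>)"
      unfolding F_def f_def by (rule div_bound[OF E K ac]) auto
    also have "\<dots> = 1" using K.emeasure_space_1 by simp
    finally show ?thesis .
  qed
  obtain n where n: "N = ennreal n" "n \<ge> 0"
    using Nv by (cases N rule: ennreal_cases) (auto simp: top_unique)
  have key: "max 0 (1 + ln c) * a + max 0 (1 + ln c') * (1 - a) - (max 0 (- (1 + ln c)) * a + max 0 (- (1 + ln c')) * (1 - a))
     = a * (1 + ln c) + (1 - a) * (1 + ln c')"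
  proof -
    have h: "max 0 t * z - max 0 (-t) * z = t * z" for t z :: real
    proof -
      have "max 0 t - max 0 (-t) = t" by auto
      then show ?thesis by (metis left_diff_distrib)
    qed
    show ?thesis using h[of "1 + ln c" a] h[of "1 + ln c'" "1 - a"] by (simp add: algebra_simps)
  qed
  have a01: "0 \<le> a" "a \<le> 1" "0 \<le> b" "b \<le> 1" unfolding a_def b_def by auto
  show ?thesis
  proof (cases P rule: ennreal_cases)
    case top
    then show ?thesis using KLe n by simp
  next
    case (real p0)
    have "ennreal (n + (max 0 (1 + ln c) * a + max 0 (1 + ln c') * (1 - a)))
        \<le> ennreal (p0 + (c * b + c' * (1 - b)) + (max 0 (- (1 + ln c)) * a + max 0 (- (1 + ln c')) * (1 - a)))"
    proof -
      have "N + Kp \<le> P + ennreal (c * b + c' * (1 - b)) + Km"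
        using main Qv by (meson add_mono order_refl order_trans)
      then show ?thesis unfolding n Kpv Kmv real using a01 c n real
        by (simp add: ennreal_plus[symmetric] del: ennreal_plus)
    qed
    then have "n + (max 0 (1 + ln c) * a + max 0 (1 + ln c') * (1 - a))
        \<le> p0 + (c * b + c' * (1 - b)) + (max 0 (- (1 + ln c)) * a + max 0 (- (1 + ln c')) * (1 - a))"
      using a01 c real by (subst (asm) ennreal_le_iff) auto
    then show ?thesis unfolding KLe real n using real n key a_def b_def
      by simp
  qed
qed


definition mixm :: "real measure \<Rightarrow> real measure \<Rightarrow> real \<Rightarrow> real measure" where
  "mixm M N w = measure_of (space M) (sets M) (\<lambda>S. emeasure M S + ennreal w * emeasure N S)"

lemma sets_mixm[simp]: "sets (mixm M N w) = sets M"
  unfolding mixm_def by (simp add: sets_measure_of sets.space_closed)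

lemma space_mixm[simp]: "space (mixm M N w) = space M"
  unfolding mixm_def by (simp add: space_measure_of_conv)

lemma emeasure_mixm:
  assumes N: "sets N = sets M" and S: "S \<in> sets M"
  shows "emeasure (mixm M N w) S = emeasure M S + ennreal w * emeasure N S"
  unfolding mixm_def
proof (rule emeasure_measure_of_sigma[OF _ _ _ S])
  show "sigma_algebra (space M) (sets M)" by (rule sets.sigma_algebra_axioms)
  show "positive (sets M) (\<lambda>S. emeasure M S + ennreal w * emeasure N S)"
    unfolding positive_def by simp
  show "countably_additive (sets M) (\<lambda>S. emeasure M S + ennreal w * emeasure N S)"
    unfolding countably_additive_def
  proof (intro allI impI)
    fix A :: "nat \<Rightarrow> real set"
    assume A: "range A \<subseteq> sets M" "disjoint_family A" "\<Union> (range A) \<in> sets M"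
    have AN: "range A \<subseteq> sets N" using A N by simp
    have "(\<Sum>i. emeasure M (A i) + ennreal w * emeasure N (A i))
        = (\<Sum>i. emeasure M (A i)) + (\<Sum>i. ennreal w * emeasure N (A i))"
      by (rule suminf_add[symmetric]) simp_all
    also have "\<dots> = emeasure M (\<Union>i. A i) + ennreal w * emeasure N (\<Union>i. A i)"
      using suminf_emeasure[OF A(1,2)] suminf_emeasure[OF AN A(2)] by simp
    finally show "(\<Sum>i. emeasure M (A i) + ennreal w * emeasure N (A i))
        = emeasure M (\<Union> (range A)) + ennreal w * emeasure N (\<Union> (range A))" by simp
  qed
qed

lemma mp_identity: "max 0 t * z - max 0 (-t) * z = t * (z::real)"
proof -
  have "max 0 t - max 0 (-t) = t" by auto
  then show ?thesis by (metis left_diff_distrib)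
qed

lemma construct:
  assumes E: "prob_real \<eta>" and A: "A \<in> sets borel" and uv: "u > 0" "v > 0" "w \<ge> 0"
    and tot: "u * measure \<eta> A + v * (1 - measure \<eta> A) + w = 1"
    and z0: "measure \<eta> {z} = 0"
  shows "\<exists>\<kappa>. prob_real \<kappa> \<and> KL \<eta> \<kappa> = ereal (- (measure \<eta> A * ln u + (1 - measure \<eta> A) * ln v))
     \<and> (\<forall>S \<in> sets borel. measure \<kappa> S = u * measure \<eta> (S \<inter> A) + v * measure \<eta> (S - A) + w * indicator S z)"
proof -
  interpret E: real_distribution \<eta> using rd[OF E] .
  have sA[measurable]: "A \<in> sets borel" by fact
  define a where "a = measure \<eta> A"
  define g where "g x = ennreal (if x \<in> A then u else v)" for x
  have gm[measurable]: "g \<in> borel_measurable borel" unfolding g_def by measurable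
  define M0 where "M0 = density \<eta> g"
  define \<kappa> where "\<kappa> = mixm M0 (return borel z) w"
  have sM0[simp]: "sets M0 = sets borel" unfolding M0_def by simp
  have sk[simp]: "sets \<kappa> = sets borel" unfolding \<kappa>_def by simp
  have spk[simp]: "space \<kappa> = UNIV" unfolding \<kappa>_def M0_def by simp
  have M0v: "emeasure M0 T = ennreal (u * measure \<eta> (T \<inter> A) + v * measure \<eta> (T - A))"
    if T[measurable]: "T \<in> sets borel" for T
  proof -
    have "emeasure M0 T = (\<integral>\<^sup>+x. g x * indicator T x \<partial>\<eta>)"
      unfolding M0_def by (rule emeasure_density) auto
    also have "\<dots> = (\<integral>\<^sup>+x. ennreal u * indicator (T \<inter> A) x + ennreal v * indicator (T - A) x \<partial>\<eta>)"
      by (rule nn_integral_cong) (auto simp: g_def split: split_indicator)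
    also have "\<dots> = ennreal u * emeasure \<eta> (T \<inter> A) + ennreal v * emeasure \<eta> (T - A)"
      by (simp add: nn_integral_add nn_integral_cmult_indicator del: E.events_eq_borel)
    also have "\<dots> = ennreal (u * measure \<eta> (T \<inter> A) + v * measure \<eta> (T - A))"
      using uv by (simp add: E.emeasure_eq_measure ennreal_mult)
    finally show ?thesis .
  qed
  have kv: "emeasure \<kappa> S = ennreal (u * measure \<eta> (S \<inter> A) + v * measure \<eta> (S - A) + w * indicator S z)"
    if S[measurable]: "S \<in> sets borel" for S
  proof -
    have "emeasure \<kappa> S = emeasure M0 S + ennreal w * emeasure (return borel z) S"
      unfolding \<kappa>_def by (rule emeasure_mixm) auto
    also have "\<dots> = ennreal (u * measure \<eta> (S \<inter> A) + v * measure \<eta> (S - A)) + ennreal w * ennreal (indicator S z)"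
      using M0v[OF S] by (simp split: split_indicator)
    also have "\<dots> = ennreal (u * measure \<eta> (S \<inter> A) + v * measure \<eta> (S - A) + w * indicator S z)"
      using uv by (simp add: ennreal_mult)
    finally show ?thesis .
  qed
  have mk: "measure \<kappa> S = u * measure \<eta> (S \<inter> A) + v * measure \<eta> (S - A) + w * indicator S z"
    if S: "S \<in> sets borel" for S
  proof -
    have nn: "0 \<le> u * measure \<eta> (S \<inter> A) + v * measure \<eta> (S - A) + w * indicator S z" using uv by simp
    show ?thesis unfolding measure_def[of \<kappa> S] kv[OF S] using nn by (simp only: enn2real_ennreal)
  qed
  have "emeasure \<kappa> (space \<kappa>) = ennreal (u * a + v * (1 - a) + w)"
    using kv[of UNIV] E.prob_compl[of A] unfolding a_def by simp
  then have pk: "prob_space \<kappa>" using tot a_def by (intro prob_spaceI) simp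
  have K: "prob_real \<kappa>" unfolding prob_real_def using pk by simp
  interpret K: real_distribution \<kappa> using rd[OF K] .
  define f where "f x = ennreal (if x = z then 0 else if x \<in> A then 1 / u else 1 / v)" for x
  have fm[measurable]: "f \<in> borel_measurable borel" unfolding f_def by measurable
  have fm0: "f \<in> borel_measurable \<kappa>" by simp
  have znull: "{z} \<in> null_sets \<eta>" using z0 by (simp add: E.emeasure_eq_measure null_sets_def)
  have dens: "density \<kappa> f = \<eta>"
  proof (rule measure_eqI)
    show "sets (density \<kappa> f) = sets \<eta>" by simp
    fix S assume "S \<in> sets (density \<kappa> f)"
    then have S[measurable]: "S \<in> sets borel" by simp
    have "emeasure (density \<kappa> f) S = (\<integral>\<^sup>+x. f x * indicator S x \<partial>\<kappa>)"
      by (rule emeasure_density) auto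
    also have "\<dots> = (\<integral>\<^sup>+x. ennreal (1/u) * indicator (S \<inter> A - {z}) x + ennreal (1/v) * indicator (S - A - {z}) x \<partial>\<kappa>)"
      by (rule nn_integral_cong) (auto simp: f_def split: split_indicator)
    also have "\<dots> = ennreal (1/u) * emeasure \<kappa> (S \<inter> A - {z}) + ennreal (1/v) * emeasure \<kappa> (S - A - {z})"
      by (simp add: nn_integral_add nn_integral_cmult_indicator del: K.events_eq_borel)
    also have "\<dots> = ennreal (1/u) * ennreal (u * measure \<eta> (S \<inter> A)) + ennreal (1/v) * ennreal (v * measure \<eta> (S - A))"
    proof -
      have e1: "measure \<eta> (S \<inter> A - {z}) = measure \<eta> (S \<inter> A)"
        by (rule measure_Diff_null_set[OF _ znull]) simp
      have e2: "measure \<eta> (S - A - {z}) = measure \<eta> (S - A)"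
        by (rule measure_Diff_null_set[OF _ znull]) simp
      have e3: "measure \<eta> (S \<inter> A - {z} - A) = 0"
      proof -
        have "S \<inter> A - {z} - A = {}" by blast
        then show ?thesis by (metis measure_empty)
      qed
      have "(S \<inter> A - {z}) \<inter> A = S \<inter> A - {z}" "(S - A - {z}) \<inter> A = {}" "S - A - {z} - A = S - A - {z}"
        by auto
      then show ?thesis using kv[of "S \<inter> A - {z}"] kv[of "S - A - {z}"] e1 e2 e3 by simp
    qed
    also have "\<dots> = emeasure \<eta> (S \<inter> A) + emeasure \<eta> (S - A)"
      using uv by (simp add: ennreal_mult[symmetric] E.emeasure_eq_measure del: ennreal_mult)
    also have "\<dots> = emeasure \<eta> ((S \<inter> A) \<union> (S - A))"
      by (rule plus_emeasure) auto
    also have "\<dots> = emeasure \<eta> S" by (simp add: Int_Diff_Un)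
    finally show "emeasure (density \<kappa> f) S = emeasure \<eta> S" .
  qed
  have ac: "absolutely_continuous \<kappa> \<eta>"
    using absolutely_continuousI_density[OF fm0] dens by simp
  have se: "sets \<eta> = sets \<kappa>" by simp
  have RNk: "AE x in \<kappa>. f x = RN_deriv \<kappa> \<eta> x" by (rule K.RN_deriv_unique[OF fm0 dens])
  have RNe: "AE x in \<eta>. f x = RN_deriv \<kappa> \<eta> x" by (rule absolutely_continuous_AE[OF se ac RNk])
  have RNe': "AE x in \<eta>. RN_deriv \<kappa> \<eta> x = f x" using RNe by eventually_elim simp
  have nz: "AE x in \<eta>. x \<noteq> z" using AE_not_in[OF znull] by simp
  have P: "(\<integral>\<^sup>+x. ennreal (max 0 (ln (enn2real (RN_deriv \<kappa> \<eta> x)))) \<partial>\<eta>)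
      = ennreal (max 0 (- ln u) * a + max 0 (- ln v) * (1 - a))"
    unfolding a_def
    apply (rule nn_two[OF E A]) apply simp apply simp
    using RNe' nz apply eventually_elim using uv by (auto simp: f_def ln_div ln_inverse)
  have N: "(\<integral>\<^sup>+x. ennreal (max 0 (- ln (enn2real (RN_deriv \<kappa> \<eta> x)))) \<partial>\<eta>)
      = ennreal (max 0 (ln u) * a + max 0 (ln v) * (1 - a))"
    unfolding a_def
    apply (rule nn_two[OF E A]) apply simp apply simp
    using RNe' nz apply eventually_elim using uv by (auto simp: f_def ln_div ln_inverse)
  have a01: "0 \<le> a" "a \<le> 1" unfolding a_def by auto
  have "KL \<eta> \<kappa> = ereal (max 0 (- ln u) * a + max 0 (- ln v) * (1 - a)) - ereal (max 0 (ln u) * a + max 0 (ln v) * (1 - a))"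
  proof -
    have nn1: "0 \<le> max 0 (- ln u) * a + max 0 (- ln v) * (1 - a)" using a01 by simp
    have nn2: "0 \<le> max 0 (ln u) * a + max 0 (ln v) * (1 - a)" using a01 by simp
    show ?thesis by (simp only: KL_def if_P[OF ac] P N enn2ereal_ennreal[OF nn1] enn2ereal_ennreal[OF nn2])
  qed
  also have "\<dots> = ereal (- (a * ln u + (1 - a) * ln v))"
    using mp_identity[of "- ln u" a] mp_identity[of "- ln v" "1 - a"] by (simp add: algebra_simps)
  finally have "KL \<eta> \<kappa> = ereal (- (measure \<eta> A * ln u + (1 - measure \<eta> A) * ln v))" unfolding a_def .
  then show ?thesis using K mk by blast
qed


lemma d2_alt: "d2 r q = r * ln (r / q) + (1 - r) * ln ((1 - r) / (1 - q))"
  by (simp add: d2_def)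

lemma d2_pp: "0 < p \<Longrightarrow> p < 1 \<Longrightarrow> d2 p p = 0"
  by (simp add: d2_alt)

lemma lin_id:
  fixes a b p :: real assumes "0 < p" "p < 1"
  shows "(a / p) * b + ((1 - a) / (1 - p)) * (1 - b) = 1 + (b - p) * (a - p) / (p * (1 - p))"
  using assms by (simp add: field_simps)

lemma combo:
  fixes a b p :: real
  assumes p: "0 < p" "p < 1" and s: "(b - p) * (a - p) \<le> 0"
  shows "a * (1 + ln (a / p)) + (1 - a) * (1 + ln ((1 - a) / (1 - p))) - (a / p) * b - ((1 - a) / (1 - p)) * (1 - b) \<ge> d2 a p"
proof -
  have "(b - p) * (a - p) / (p * (1 - p)) \<le> 0"
    using s p by (intro divide_nonpos_pos) auto
  then have "(a / p) * b + ((1 - a) / (1 - p)) * (1 - b) \<le> 1" using lin_id[OF p, of a b] by linarith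
  then show ?thesis unfolding d2_alt by (simp add: algebra_simps)
qed

lemma nonatom:
  assumes "prob_real \<eta>" obtains z where "measure \<eta> {z} = 0"
proof -
  interpret E: real_distribution \<eta> using rd[OF assms] .
  have "\<exists>z. \<not> measure \<eta> {z} > 0"
  proof (rule ccontr)
    assume "\<not> ?thesis"
    then have "UNIV \<subseteq> {x. measure \<eta> {x} > 0}" by auto
    then have "countable (UNIV :: real set)" using E.countable_atoms countable_subset by blast
    then show False using uncountable_UNIV_real by blast
  qed
  then obtain z where "\<not> measure \<eta> {z} > 0" by blast
  then have "measure \<eta> {z} = 0" using measure_nonneg[of \<eta> "{z}"] by linarith
  then show ?thesis using that by blast
qed

lemma partL:
  fixes p y :: real and \<eta> :: "real measure"
  assumes p: "0 < p" "p < 1" and E: "prob_real \<eta>"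
  shows "KLinf_L p \<eta> y = ereal (d2 (min (cdf_of \<eta> y) p) p)"
proof -
  interpret E: real_distribution \<eta> using rd[OF E] .
  obtain z0 where z0: "measure \<eta> {z0} = 0" using nonatom[OF E] by blast
  define A where "A = {..y}"
  have A: "A \<in> sets borel" unfolding A_def by simp
  define a where "a = measure \<eta> A"
  have aF: "cdf_of \<eta> y = a" unfolding a_def A_def cdf_of_def by simp
  have a01: "0 \<le> a" "a \<le> 1" unfolding a_def by auto
  define SL where "SL = {KL \<eta> \<kappa> | \<kappa>. prob_real \<kappa> \<and> VaR p \<kappa> \<le> y}"
  have low: "ereal (d2 (min a p) p) \<le> k" if "k \<in> SL" for k
  proof -
    obtain \<kappa> where K: "prob_real \<kappa>" and V: "VaR p \<kappa> \<le> y" and k: "k = KL \<eta> \<kappa>"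
      using \<open>k \<in> SL\<close> unfolding SL_def by blast
    interpret K: real_distribution \<kappa> using rd[OF K] .
    define b where "b = measure \<kappa> A"
    have b01: "0 \<le> b" "b \<le> 1" unfolding b_def by auto
    have "p \<le> cdf_of \<kappa> (VaR p \<kappa>)" using VaR_props[OF K p] by blast
    also have "\<dots> \<le> cdf_of \<kappa> y" using V cdf_of_eq[OF K] K.cdf_nondecreasing by simp
    finally have bp: "p \<le> b" unfolding b_def A_def cdf_of_def by simp
    show ?thesis
    proof (cases "a \<ge> p")
      case True
      have "KL \<eta> \<kappa> \<ge> ereal (a * (1 + ln 1) + (1 - a) * (1 + ln 1) - 1 * b - 1 * (1 - b))"
        unfolding a_def b_def by (rule KL_lower[OF E K A]) auto
      then show ?thesis using True d2_pp[OF p] k by simp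
    next
      case False
      have "KL \<eta> \<kappa> \<ge> ereal (a * (1 + ln (a / p)) + (1 - a) * (1 + ln ((1 - a) / (1 - p))) - (a / p) * b - ((1 - a) / (1 - p)) * (1 - b))"
        unfolding a_def b_def by (rule KL_lower[OF E K A]) (use False a01 p in \<open>auto simp: a_def\<close>)
      moreover have "(b - p) * (a - p) \<le> 0" using False bp by (intro mult_nonneg_nonpos) auto
      ultimately show ?thesis using combo[OF p, of b a] False k
        by (metis (no_types, lifting) ereal_less_eq(3) min_def nle_le order_trans)
    qed
  qed
  have att: "ereal (d2 (min a p) p) \<in> SL"
  proof -
    have VaR_ok: "VaR p \<kappa> \<le> y" if K: "prob_real \<kappa>" and "measure \<kappa> A \<ge> p" for \<kappa>
      using VaR_props[OF K p] that unfolding A_def cdf_of_def by blast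
    show ?thesis
    proof (cases "a \<ge> p")
      case True
      obtain \<kappa> where K: "prob_real \<kappa>" and KL: "KL \<eta> \<kappa> = ereal (- (measure \<eta> A * ln 1 + (1 - measure \<eta> A) * ln 1))"
        and m: "\<forall>S \<in> sets borel. measure \<kappa> S = 1 * measure \<eta> (S \<inter> A) + 1 * measure \<eta> (S - A) + 0 * indicator S z0"
        using construct[OF E A, of 1 1 0 z0] z0 by auto
      have "measure \<kappa> A = a" using m A unfolding a_def by simp
      then have "VaR p \<kappa> \<le> y" using VaR_ok[OF K] True by simp
      then show ?thesis unfolding SL_def using K KL True d2_pp[OF p] by (auto intro!: exI[of _ \<kappa>])
    next
      case False
      show ?thesis
      proof (cases "a = 0")
        case a0: True
        have zy: "measure \<eta> {y} = 0"
        proof -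
          have "measure \<eta> {y} \<le> measure \<eta> A" unfolding A_def by (intro E.finite_measure_mono) auto
          then show ?thesis using a0 a_def measure_nonneg[of \<eta> "{y}"] by linarith
        qed
        obtain \<kappa> where K: "prob_real \<kappa>" and KL: "KL \<eta> \<kappa> = ereal (- (measure \<eta> A * ln 1 + (1 - measure \<eta> A) * ln (1 - p)))"
          and m: "\<forall>S \<in> sets borel. measure \<kappa> S = 1 * measure \<eta> (S \<inter> A) + (1 - p) * measure \<eta> (S - A) + p * indicator S y"
          using construct[OF E A, of 1 "1 - p" p y] zy p a0 a_def by auto
        have "measure \<kappa> A = p" using m A a0 unfolding a_def A_def by simp
        then have "VaR p \<kappa> \<le> y" using VaR_ok[OF K] by simp
        moreover have "KL \<eta> \<kappa> = ereal (d2 (min a p) p)"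
          using KL a0 p unfolding a_def d2_alt by (simp add: ln_div)
        ultimately show ?thesis unfolding SL_def using K by (auto intro!: exI[of _ \<kappa>])
      next
        case a0: False
        then have apos: "a > 0" using a01 by simp
        obtain \<kappa> where K: "prob_real \<kappa>" and KL: "KL \<eta> \<kappa> = ereal (- (measure \<eta> A * ln (p / a) + (1 - measure \<eta> A) * ln ((1 - p) / (1 - a))))"
          and m: "\<forall>S \<in> sets borel. measure \<kappa> S = (p / a) * measure \<eta> (S \<inter> A) + ((1 - p) / (1 - a)) * measure \<eta> (S - A) + 0 * indicator S z0"
          using construct[OF E A, of "p / a" "(1 - p) / (1 - a)" 0 z0] z0 p apos False a01 a_def
          by (auto simp: field_simps)
        have "measure \<kappa> A = p" using m A apos unfolding a_def by simp
        then have "VaR p \<kappa> \<le> y" using VaR_ok[OF K] by simp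
        moreover have "KL \<eta> \<kappa> = ereal (d2 (min a p) p)"
          using KL apos p False unfolding a_def[symmetric] d2_alt
          by (simp add: ln_div algebra_simps)
        ultimately show ?thesis unfolding SL_def using K by (auto intro!: exI[of _ \<kappa>])
      qed
    qed
  qed
  have "KLinf_L p \<eta> y = Inf SL" unfolding KLinf_L_def SL_def by simp
  also have "\<dots> = ereal (d2 (min a p) p)"
    by (rule antisym[OF Inf_lower[OF att] Inf_greatest[OF low]])
  finally show ?thesis using aF by simp
qed

lemma partU:
  fixes p y :: real and \<eta> :: "real measure"
  assumes p: "0 < p" "p < 1" and E: "prob_real \<eta>"
  shows "KLinf_U p \<eta> y = ereal (d2 (max (cdf_left \<eta> y) p) p)"
proof -
  interpret E: real_distribution \<eta> using rd[OF E] .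
  obtain z0 where z0: "measure \<eta> {z0} = 0" using nonatom[OF E] by blast
  define A where "A = {..<y}"
  have A: "A \<in> sets borel" unfolding A_def by simp
  define a where "a = measure \<eta> A"
  have aF: "cdf_left \<eta> y = a" unfolding a_def A_def using cdf_left_eq[OF E] by simp
  have a01: "0 \<le> a" "a \<le> 1" unfolding a_def by auto
  define SU where "SU = {KL \<eta> \<kappa> | \<kappa>. prob_real \<kappa> \<and> VaR p \<kappa> \<ge> y}"
  have low: "ereal (d2 (max a p) p) \<le> k" if "k \<in> SU" for k
  proof -
    obtain \<kappa> where K: "prob_real \<kappa>" and V: "VaR p \<kappa> \<ge> y" and k: "k = KL \<eta> \<kappa>"
      using \<open>k \<in> SU\<close> unfolding SU_def by blast
    interpret K: real_distribution \<kappa> using rd[OF K] .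
    define b where "b = measure \<kappa> A"
    have b01: "0 \<le> b" "b \<le> 1" unfolding b_def by auto
    have lt: "cdf \<kappa> t < p" if "t < y" for t
    proof (rule ccontr)
      assume "\<not> cdf \<kappa> t < p"
      then have "VaR p \<kappa> \<le> t" using VaR_props[OF K p] cdf_of_eq[OF K] by auto
      then show False using V that by simp
    qed
    have ev: "eventually (\<lambda>t. cdf \<kappa> t \<le> p) (at_left y)"
      unfolding eventually_at_left_field using lt by (intro exI[of _ "y - 1"]) (auto simp: less_imp_le)
    have bp: "b \<le> p"
      unfolding b_def A_def by (rule tendsto_upperbound[OF K.cdf_at_left ev]) simp
    show ?thesis
    proof (cases "a \<le> p")
      case True
      have "KL \<eta> \<kappa> \<ge> ereal (a * (1 + ln 1) + (1 - a) * (1 + ln 1) - 1 * b - 1 * (1 - b))"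
        unfolding a_def b_def by (rule KL_lower[OF E K A]) auto
      then show ?thesis using True d2_pp[OF p] k by simp
    next
      case False
      have "KL \<eta> \<kappa> \<ge> ereal (a * (1 + ln (a / p)) + (1 - a) * (1 + ln ((1 - a) / (1 - p))) - (a / p) * b - ((1 - a) / (1 - p)) * (1 - b))"
        unfolding a_def b_def by (rule KL_lower[OF E K A]) (use False a01 p in \<open>auto simp: a_def\<close>)
      moreover have "(b - p) * (a - p) \<le> 0" using False bp by (intro mult_nonpos_nonneg) auto
      ultimately show ?thesis using combo[OF p, of b a] False k
        by (metis (no_types, lifting) ereal_less_eq(3) max_def nle_le order_trans)
    qed
  qed
  have VaR_ok: "VaR p \<kappa> \<ge> y" if K: "prob_real \<kappa>" and lt: "\<And>t. t < y \<Longrightarrow> measure \<kappa> {..t} < p" for \<kappa>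
  proof (rule ccontr)
    assume "\<not> VaR p \<kappa> \<ge> y"
    then have "measure \<kappa> {..VaR p \<kappa>} < p" using lt by simp
    then show False using VaR_props[OF K p] unfolding cdf_of_def by simp
  qed
  have tsub: "{..t} \<inter> A = {..t}" "{..t} - A = {}" if "t < y" for t
    using that unfolding A_def by auto
  have tsub0: "measure \<eta> ({..t} - A) = 0" if "t < y" for t
    using tsub(2)[OF that] by (metis measure_empty)
  have mono_t: "measure \<eta> {..t} \<le> a" if "t < y" for t
    unfolding a_def A_def using that by (intro E.finite_measure_mono) auto
  have upper: "Inf SU \<le> ereal (d2 (max a p) p)"
  proof (cases "a \<le> p")
    case True
    then have a1: "a < 1" using p by simp
    have bnd: "Inf SU \<le> ereal (- ln (1 - e))" if e: "0 < e" "e < 1" for e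
    proof -
      define u where "u = 1 - e"
      define v where "v = (1 - u * a) / (1 - a)"
      have u: "0 < u" "u < 1" using e unfolding u_def by auto
      have ua: "u * a \<le> a" using u a01 by (intro mult_left_le_one_le) auto
      have ua1: "u * a < 1" using ua a1 by simp
      have v: "v > 0" "v \<ge> 1" using ua ua1 a1 unfolding v_def by (auto simp: field_simps)
      obtain \<kappa> where K: "prob_real \<kappa>" and KL: "KL \<eta> \<kappa> = ereal (- (measure \<eta> A * ln u + (1 - measure \<eta> A) * ln v))"
        and m: "\<forall>S \<in> sets borel. measure \<kappa> S = u * measure \<eta> (S \<inter> A) + v * measure \<eta> (S - A) + 0 * indicator S z0"
        using construct[OF E A, of u v 0 z0] z0 u v a1 a_def unfolding v_def by (auto simp: field_simps)
      have "VaR p \<kappa> \<ge> y"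
      proof (rule VaR_ok[OF K])
        fix t assume t: "t < y"
        have "measure \<kappa> {..t} = u * measure \<eta> {..t}" using m tsub(1)[OF t] tsub0[OF t] by simp
        also have "\<dots> \<le> u * a" using mono_t[OF t] u by simp
        also have "\<dots> < p"
        proof (cases "a = 0")
          case False
          then have "u * a < a" using u a01 by simp
          then show ?thesis using True by simp
        qed (use p in simp)
        finally show "measure \<kappa> {..t} < p" .
      qed
      then have "KL \<eta> \<kappa> \<in> SU" unfolding SU_def using K by blast
      then have "Inf SU \<le> KL \<eta> \<kappa>" by (rule Inf_lower)
      also have "\<dots> \<le> ereal (- ln (1 - e))"
      proof -
        have "ln u \<le> 0" using u by simp
        have "ln v \<ge> 0" using v by simp
        have "(1 - a) * ln u \<le> 0" using \<open>ln u \<le> 0\<close> a01 by (intro mult_nonneg_nonpos) auto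
        then have "- (a * ln u) \<le> - ln u" by (simp add: algebra_simps)
        moreover have "(1 - a) * ln v \<ge> 0" using \<open>ln v \<ge> 0\<close> a01 by simp
        ultimately have "- (a * ln u + (1 - a) * ln v) \<le> - ln (1 - e)" unfolding u_def by linarith
        then show ?thesis using KL unfolding a_def by simp
      qed
      finally show ?thesis .
    qed
    have "0 \<le> ereal 0" by simp
    have lim: "((\<lambda>e. ereal (- ln (1 - e))) \<longlongrightarrow> ereal (- ln (1 - 0))) (at_right 0)"
      by (intro tendsto_ereal tendsto_intros) auto
    have ev: "eventually (\<lambda>e. Inf SU \<le> ereal (- ln (1 - e))) (at_right (0::real))"
      unfolding eventually_at_right_field using bnd by (intro exI[of _ 1]) auto
    have "Inf SU \<le> ereal (- ln (1 - 0))"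
      by (rule tendsto_le[OF trivial_limit_at_right_real lim tendsto_const ev])
    then show ?thesis using True d2_pp[OF p] by simp
  next
    case False
    then have apos: "a > 0" using p by simp
    define G where "G q = a * ln (a / q) + (1 - a) * ln ((1 - a) / (1 - q))" for q
    have bnd: "Inf SU \<le> ereal (G q)" if q: "0 < q" "q < p" for q
    proof -
      define u where "u = q / a"
      define v where "v = (if a = 1 then 1 else (1 - q) / (1 - a))"
      define w where "w = (if a = 1 then 1 - q else 0)"
      define z where "z = (if a = 1 then y else z0)"
      have u: "u > 0" using q apos unfolding u_def by simp
      have v: "v > 0" using q p a01 unfolding v_def by auto
      have w: "w \<ge> 0" using q p unfolding w_def by auto
      have tot: "u * a + v * (1 - a) + w = 1"
        using apos a01 unfolding u_def v_def w_def by (auto simp: field_simps)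
      have zn: "measure \<eta> {z} = 0"
      proof (cases "a = 1")
        case True
        have "measure \<eta> {y} \<le> measure \<eta> (space \<eta> - A)" unfolding A_def by (intro E.finite_measure_mono) auto
        also have "\<dots> = 0" using E.prob_compl[of A] True A unfolding a_def by simp
        finally show ?thesis unfolding z_def using True measure_nonneg[of \<eta> "{y}"] by simp
      qed (use z0 z_def in simp)
      obtain \<kappa> where K: "prob_real \<kappa>" and KL: "KL \<eta> \<kappa> = ereal (- (measure \<eta> A * ln u + (1 - measure \<eta> A) * ln v))"
        and m: "\<forall>S \<in> sets borel. measure \<kappa> S = u * measure \<eta> (S \<inter> A) + v * measure \<eta> (S - A) + w * indicator S z"
        using construct[OF E A u v w] tot zn unfolding a_def by blast
      have "VaR p \<kappa> \<ge> y"
      proof (rule VaR_ok[OF K])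
        fix t assume t: "t < y"
        have "w * indicator {..t} z = 0" using t unfolding w_def z_def by (auto split: split_indicator)
        then have "measure \<kappa> {..t} = u * measure \<eta> {..t}" using m tsub(1)[OF t] tsub0[OF t] by simp
        also have "\<dots> \<le> u * a" using mono_t[OF t] u by simp
        also have "\<dots> = q" unfolding u_def using apos by simp
        finally show "measure \<kappa> {..t} < p" using q by simp
      qed
      then have "KL \<eta> \<kappa> \<in> SU" unfolding SU_def using K by blast
      then have "Inf SU \<le> KL \<eta> \<kappa>" by (rule Inf_lower)
      also have "KL \<eta> \<kappa> = ereal (G q)"
      proof -
        have "- (a * ln u + (1 - a) * ln v) = G q"
        proof (cases "a = 1")
          case True
          then show ?thesis unfolding G_def u_def v_def using q by (simp add: ln_div)
        next
          case False
          then have "a < 1" using a01 by simp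
          then show ?thesis unfolding G_def u_def v_def using q apos p by (simp add: ln_div algebra_simps)
        qed
        then show ?thesis using KL unfolding a_def by simp
      qed
      finally show ?thesis .
    qed
    have lim: "((\<lambda>q. ereal (G q)) \<longlongrightarrow> ereal (G p)) (at_left p)"
    proof (cases "a = 1")
      case True
      then have "G = (\<lambda>q. ln (1 / q))" unfolding G_def by auto
      then show ?thesis using p by (auto intro!: tendsto_ereal tendsto_intros)
    next
      case False
      then have "a < 1" using a01 by simp
      then show ?thesis unfolding G_def using p apos by (auto intro!: tendsto_ereal tendsto_intros)
    qed
    have ev: "eventually (\<lambda>q. Inf SU \<le> ereal (G q)) (at_left p)"
      unfolding eventually_at_left_field using bnd p by (intro exI[of _ 0]) auto
    have "Inf SU \<le> ereal (G p)"
      by (rule tendsto_le[OF trivial_limit_at_left_real lim tendsto_const ev])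
    then show ?thesis using False unfolding G_def d2_alt by simp
  qed
  have "KLinf_U p \<eta> y = Inf SU" unfolding KLinf_U_def SU_def by simp
  also have "\<dots> = ereal (d2 (max a p) p)"
    by (rule antisym[OF upper Inf_greatest[OF low]])
  finally show ?thesis using aF by simp
qed

theorem lemma5:
  fixes p y :: real and \<eta> :: "real measure"
  assumes "0 < p" "p < 1" and "prob_real \<eta>"
  shows "KLinf_L p \<eta> y = ereal (d2 (min (cdf_of \<eta> y) p) p)
       \<and> KLinf_U p \<eta> y = ereal (d2 (max (cdf_left \<eta> y) p) p)"
  using partL[OF assms] partU[OF assms] by blast

end
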